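(* Let $T>0$ and let $G:\mathbb{R}\leadsto\mathbb{R}$ be a Lipschitz continuous set-valued map with nonempty, convex, closed values. Let $U,W:[0,T]\times\mathbb{R}\to\mathbb{R}$ be continuous functions such that: (U1) for every $x\in\mathrm{Sol}(G)$ and all $t_1<t_2$ in $[0,T]$, $U(t_1,x(t_1))\geqslant U(t_2,x(t_2))$; (U2) for every $(t_0,x_0)\in[0,T]\times\mathbb{R}$ there is $\bar x\in\mathrm{Sol}_G(t_0,x_0)$ with $U(t,\bar x(t))=U(t_0,x_0)$ for all $t\in[0,t_0]$; (W1) for every $x\in\mathrm{Sol}(G)$ and all $t_1<t_2$ in $[0,T]$, $W(t_1,x(t_1))\geqslant W(t_2,x(t_2))$; (W2) for every $(t_0,x_0)\in[0,T]\times\mathbb{R}$ there is $\tilde x\in\mathrm{Sol}_G(t_0,x_0)$ with $W(t_0,x_0)=W(t,\tilde x(t))$ for all $t\in[t_0,T]$. If $U(0,\cdot)=W(0,\cdot)$ and $U(T,\cdot)=W(T,\cdot)$, then $U=W$ on $[0,T]\times\mathbb{R}$.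
   Context: $\mathrm{Sol}(G)$ is the set of absolutely continuous $x:[0,T]\to\mathbb{R}$ with $\dot x(t)\in G(x(t))$ for a.e. $t\in[0,T]$, and $\mathrm{Sol}_G(t_0,x_0)$ is the subset of those with $x(t_0)=x_0$. *)

theory Defs
  imports "HOL-Analysis.Analysis"
begin

definition abs_continuous_on :: "real \<Rightarrow> real \<Rightarrow> (real \<Rightarrow> real) \<Rightarrow> bool" where
  "abs_continuous_on a b x \<longleftrightarrow>
     (\<forall>\<epsilon>>0. \<exists>\<delta>>0. \<forall>(n::nat) (p::nat \<Rightarrow> real) (q::nat \<Rightarrow> real).
        (\<forall>i<n. a \<le> p i \<and> p i \<le> q i \<and> q i \<le> b) \<and>
        (\<forall>i j. i < j \<and> j < n \<longrightarrow> q i \<le> p j) \<and>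
        (\<Sum>i<n. q i - p i) < \<delta>
        \<longrightarrow> (\<Sum>i<n. \<bar>x (q i) - x (p i)\<bar>) < \<epsilon>)"

definition lipschitz_setvalued :: "(real \<Rightarrow> real set) \<Rightarrow> bool" where
  "lipschitz_setvalued G \<longleftrightarrow>
     (\<exists>L\<ge>0. \<forall>x y. \<forall>u\<in>G x. \<exists>v\<in>G y. \<bar>u - v\<bar> \<le> L * \<bar>x - y\<bar>)"

definition Sol :: "real \<Rightarrow> (real \<Rightarrow> real set) \<Rightarrow> (real \<Rightarrow> real) set" where
  "Sol T G = {x. abs_continuous_on 0 T x \<and>
     (AE t in lebesgue. t \<in> {0..T} \<longrightarrow>
        (\<exists>d. (x has_real_derivative d) (at t within {0..T}) \<and> d \<in> G (x t)))}"

definition Sol_at :: "real \<Rightarrow> (real \<Rightarrow> real set) \<Rightarrow> real \<Rightarrow> real \<Rightarrow> (real \<Rightarrow> real) set" where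
  "Sol_at T G t0 x0 = {x \<in> Sol T G. x t0 = x0}"

end

theory Submission
  imports Defs
begin

lemma sol_cont:
  assumes "x \<in> Sol T G"
  shows "continuous_on {0..T} x"
proof -
  have ac: "abs_continuous_on 0 T x" using assms unfolding Sol_def by auto
  show ?thesis
    unfolding continuous_on_iff
  proof (intro ballI allI impI)
    fix s e :: real assume s: "s \<in> {0..T}" and e: "0 < e"
    have "\<exists>\<delta>>0. \<forall>(n::nat) (p::nat \<Rightarrow> real) (q::nat \<Rightarrow> real).
        (\<forall>i<n. 0 \<le> p i \<and> p i \<le> q i \<and> q i \<le> T) \<and>
        (\<forall>i j. i < j \<and> j < n \<longrightarrow> q i \<le> p j) \<and>
        (\<Sum>i<n. q i - p i) < \<delta>
        \<longrightarrow> (\<Sum>i<n. \<bar>x (q i) - x (p i)\<bar>) < e"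
      using ac e unfolding abs_continuous_on_def by blast
    then obtain \<delta> where dpos: "\<delta> > 0" and H: "\<forall>(n::nat) (p::nat \<Rightarrow> real) (q::nat \<Rightarrow> real).
        (\<forall>i<n. 0 \<le> p i \<and> p i \<le> q i \<and> q i \<le> T) \<and>
        (\<forall>i j. i < j \<and> j < n \<longrightarrow> q i \<le> p j) \<and>
        (\<Sum>i<n. q i - p i) < \<delta>
        \<longrightarrow> (\<Sum>i<n. \<bar>x (q i) - x (p i)\<bar>) < e"
      by blast
    show "\<exists>d>0. \<forall>x'\<in>{0..T}. dist x' s < d \<longrightarrow> dist (x x') (x s) < e"
    proof (intro exI conjI ballI impI)
      show "\<delta> > 0" by (rule dpos)
    next
      fix x' assume x': "x' \<in> {0..T}" and dd: "dist x' s < \<delta>"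
      have md: "max x' s - min x' s < \<delta>" using dd by (auto simp: dist_real_def max_def min_def)
      have "(\<Sum>i<(1::nat). \<bar>x ((\<lambda>_. max x' s) i) - x ((\<lambda>_. min x' s) i)\<bar>) < e"
        using H[rule_format, of 1 "\<lambda>_. min x' s" "\<lambda>_. max x' s"] x' s md
        by auto
      then show "dist (x x') (x s) < e"
        by (cases "x' \<le> s") (auto simp: dist_real_def max_def min_def abs_minus_commute)
    qed
  qed
qed

lemma noncross:
  fixes f g :: "real \<Rightarrow> real"
  assumes "a \<le> b" "continuous_on {a..b} f" "continuous_on {a..b} g"
    "\<forall>s\<in>{a..b}. f s \<noteq> g s" "f a < g a"
  shows "f b < g b"
proof (rule ccontr)
  assume "\<not> f b < g b"
  hence "(\<lambda>s. g s - f s) b \<le> 0" "0 \<le> (\<lambda>s. g s - f s) a" using assms(5) by auto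
  moreover have "continuous_on {a..b} (\<lambda>s. g s - f s)"
    using assms(2,3) by (intro continuous_intros)
  ultimately obtain s where "a \<le> s" "s \<le> b" "g s - f s = 0"
    using IVT2'[of "\<lambda>s. g s - f s" b 0 a] assms(1) by auto
  thus False using assms(4) by (metis atLeastAtMost_iff eq_iff_diff_eq_0)
qed

theorem theorem5p4:
  fixes T :: real and G :: "real \<Rightarrow> real set" and U W :: "real \<Rightarrow> real \<Rightarrow> real"
  assumes T_pos: "T > 0"
    and G_lip: "lipschitz_setvalued G"
    and G_ne: "\<And>x. G x \<noteq> {}"
    and G_convex: "\<And>x. convex (G x)"
    and G_closed: "\<And>x. closed (G x)"
    and U_cont: "continuous_on ({0..T} \<times> UNIV) (\<lambda>(t, x). U t x)"
    and W_cont: "continuous_on ({0..T} \<times> UNIV) (\<lambda>(t, x). W t x)"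
    and U1: "\<And>x t1 t2. x \<in> Sol T G \<Longrightarrow> t1 \<in> {0..T} \<Longrightarrow> t2 \<in> {0..T} \<Longrightarrow> t1 < t2 \<Longrightarrow>
               U t1 (x t1) \<ge> U t2 (x t2)"
    and U2: "\<And>t0 x0. t0 \<in> {0..T} \<Longrightarrow>
               \<exists>xb \<in> Sol_at T G t0 x0. \<forall>t \<in> {0..t0}. U t (xb t) = U t0 x0"
    and W1: "\<And>x t1 t2. x \<in> Sol T G \<Longrightarrow> t1 \<in> {0..T} \<Longrightarrow> t2 \<in> {0..T} \<Longrightarrow> t1 < t2 \<Longrightarrow>
               W t1 (x t1) \<ge> W t2 (x t2)"
    and W2: "\<And>t0 x0. t0 \<in> {0..T} \<Longrightarrow>
               \<exists>xt \<in> Sol_at T G t0 x0. \<forall>t \<in> {t0..T}. W t0 x0 = W t (xt t)"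
    and init: "\<And>x. U 0 x = W 0 x"
    and final: "\<And>x. U T x = W T x"
  shows "\<forall>t \<in> {0..T}. \<forall>x. U t x = W t x"
proof -
  have D: "W t x \<le> U t x" if t: "t \<in> {0..T}" for t x
  proof (cases "t = 0")
    case True thus ?thesis using init by simp
  next
    case False
    obtain xb where xb: "xb \<in> Sol_at T G t x" "\<forall>s\<in>{0..t}. U s (xb s) = U t x"
      using U2[OF t] by blast
    have sol: "xb \<in> Sol T G" and xbt: "xb t = x" using xb(1) unfolding Sol_at_def by auto
    have "U t x = U 0 (xb 0)" using xb(2) t by auto
    also have "\<dots> = W 0 (xb 0)" by (rule init)
    finally show ?thesis using W1[OF sol, of 0 t] t False xbt by auto
  qed
  show ?thesis
  proof (intro ballI allI)
    fix t0 x0 assume t0: "t0 \<in> {0..T}"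
    show "U t0 x0 = W t0 x0"
    proof (rule ccontr)
      assume ne: "U t0 x0 \<noteq> W t0 x0"
      define d where "d = U t0 x0"
      define c where "c = W t0 x0"
      have T0: "T \<in> {0..T}" "0 \<in> {0..T}" using T_pos by auto
      obtain xb where xb: "xb \<in> Sol T G" "xb t0 = x0" "\<forall>s\<in>{0..t0}. U s (xb s) = d"
        using U2[OF t0, of x0] unfolding Sol_at_def d_def by auto
      obtain xt where xt: "xt \<in> Sol T G" "xt t0 = x0" "\<forall>s\<in>{t0..T}. W s (xt s) = c"
        using W2[OF t0, of x0] unfolding Sol_at_def c_def by force
      have "W T (xt T) = c" using xt(3) t0 by auto
      hence UT: "U T (xt T) = c" using final by simp
      obtain zb where zb: "zb \<in> Sol T G" "zb T = xt T" "\<forall>s\<in>{0..T}. U s (zb s) = c"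
        using U2[OF T0(1), of "xt T"] UT unfolding Sol_at_def by auto
      define a where "a = zb 0"
      define b where "b = xb 0"
      have Ua: "U 0 a = c" using zb(3) T0 a_def by auto
      have Ub: "U 0 b = d" using xb(3) t0 b_def by auto
      define e where "e = (c+d)/2"
      have ec: "e \<noteq> c" "e \<noteq> d" using ne unfolding e_def c_def d_def by auto
      have "continuous_on UNIV (\<lambda>x. (\<lambda>(t, x). U t x) ((\<lambda>x. (0::real, x)) x))"
        by (rule continuous_on_compose2[OF U_cont]) (use T_pos in \<open>auto intro!: continuous_intros\<close>)
      hence contU0: "continuous_on UNIV (U 0)" by simp
      have "\<exists>v. U 0 v = e \<and> ((a \<le> v \<and> v \<le> b) \<or> (b \<le> v \<and> v \<le> a))"
      proof (cases "a \<le> b")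
        case True
        have cab: "continuous_on {a..b} (U 0)" using contU0 continuous_on_subset by blast
        show ?thesis
        proof (cases "c \<le> d")
          case True
          have "U 0 a \<le> e" "e \<le> U 0 b" using True Ua Ub e_def by auto
          from IVT'[OF this \<open>a \<le> b\<close> cab] show ?thesis by blast
        next
          case False
          have "U 0 b \<le> e" "e \<le> U 0 a" using False Ua Ub e_def by auto
          from IVT2'[OF this \<open>a \<le> b\<close> cab] show ?thesis by blast
        qed
      next
        case False
        have cab: "continuous_on {b..a} (U 0)" using contU0 continuous_on_subset by blast
        show ?thesis
        proof (cases "c \<le> d")
          case True
          have "U 0 a \<le> e" "e \<le> U 0 b" using True Ua Ub e_def by auto
          from IVT2'[OF this _ cab] \<open>\<not> a \<le> b\<close> show ?thesis by force
        next
          case False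
          have "U 0 b \<le> e" "e \<le> U 0 a" using False Ua Ub e_def by auto
          from IVT'[OF this _ cab] \<open>\<not> a \<le> b\<close> show ?thesis by force
        qed
      qed
      then obtain v where v: "U 0 v = e" "(a \<le> v \<and> v \<le> b) \<or> (b \<le> v \<and> v \<le> a)" by blast
      have va: "v \<noteq> a" "v \<noteq> b" using v(1) Ua Ub ec by auto
      obtain g where g: "g \<in> Sol T G" "g 0 = v" "\<forall>s\<in>{0..T}. W 0 v = W s (g s)"
        using W2[OF T0(2), of v] unfolding Sol_at_def by auto
      have W0v: "W 0 v = e" using init[of v] v(1) by simp
      have gW: "\<forall>s\<in>{0..T}. W s (g s) = e" using g(3) W0v by auto
      have gU: "\<forall>s\<in>{0..T}. U s (g s) = e"
      proof
        fix s assume s: "s \<in> {0..T}"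
        have "e \<le> U s (g s)" using D[OF s, of "g s"] gW s by auto
        moreover have "U s (g s) \<le> e"
        proof (cases "s = 0")
          case True thus ?thesis using g(2) v(1) by simp
        next
          case False thus ?thesis using U1[OF g(1), of 0 s] s T0 g(2) v(1) by auto
        qed
        ultimately show "U s (g s) = e" by simp
      qed
      have cg: "continuous_on {0..T} g" by (rule sol_cont[OF g(1)])
      have cxb: "continuous_on {0..T} xb" by (rule sol_cont[OF xb(1)])
      have cxt: "continuous_on {0..T} xt" by (rule sol_cont[OF xt(1)])
      have czb: "continuous_on {0..T} zb" by (rule sol_cont[OF zb(1)])
      have s1: "{0..t0} \<subseteq> {0..T}" "{t0..T} \<subseteq> {0..T}" using t0 by auto
      have n1: "\<forall>s\<in>{0..T}. g s \<noteq> zb s" "\<forall>s\<in>{0..T}. zb s \<noteq> g s"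
        using gU zb(3) ec by (metis)+
      have n2: "\<forall>s\<in>{0..t0}. g s \<noteq> xb s" "\<forall>s\<in>{0..t0}. xb s \<noteq> g s"
        using gU xb(3) ec s1 by (metis subsetD)+
      have n3: "\<forall>s\<in>{t0..T}. g s \<noteq> xt s" "\<forall>s\<in>{t0..T}. xt s \<noteq> g s"
        using gW xt(3) ec s1 by (metis subsetD)+
      have cg1: "continuous_on {0..t0} g" "continuous_on {0..t0} xb"
        using cg cxb s1 continuous_on_subset by blast+
      have cg2: "continuous_on {t0..T} g" "continuous_on {t0..T} xt"
        using cg cxt s1 continuous_on_subset by blast+
      have le: "0 \<le> T" "0 \<le> t0" "t0 \<le> T" using t0 T_pos by auto
      show False
      proof (cases "a \<le> v \<and> v \<le> b")
        case True
        hence "zb 0 < g 0" "g 0 < xb 0" using va a_def b_def g(2) by auto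
        have A: "zb T < g T" by (rule noncross[OF le(1) czb cg n1(2) \<open>zb 0 < g 0\<close>])
        have "g t0 < xb t0" by (rule noncross[OF le(2) cg1 n2(1) \<open>g 0 < xb 0\<close>])
        hence "g t0 < xt t0" using xb(2) xt(2) by simp
        have "g T < xt T" by (rule noncross[OF le(3) cg2 n3(1) \<open>g t0 < xt t0\<close>])
        thus False using A zb(2) by simp
      next
        case False
        hence "g 0 < zb 0" "xb 0 < g 0" using v(2) va a_def b_def g(2) by auto
        have A: "g T < zb T" by (rule noncross[OF le(1) cg czb n1(1) \<open>g 0 < zb 0\<close>])
        have "xb t0 < g t0" by (rule noncross[OF le(2) cg1(2) cg1(1) n2(2) \<open>xb 0 < g 0\<close>])
        hence "xt t0 < g t0" using xb(2) xt(2) by simp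
        have "xt T < g T" by (rule noncross[OF le(3) cg2(2) cg2(1) n3(2) \<open>xt t0 < g t0\<close>])
        thus False using A zb(2) by simp
      qed
    qed
  qed
qed

end
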